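(* Let $X_1,\ldots,X_n$ be nonnegative i.i.d. absolutely continuous random variables with the same distribution as $X$, where $X$ has density $f$, and let $S_n=X_1+\cdots+X_n$. For every pair of integers $s,n\geq 2$, the density $f_s^{n*}$ of the $s$-iterated distribution induced by $S_n$ satisfies, for $x\geq 0$, $$f_s^{n*}(x)=\frac{\mu^{(n-1)*}_{s-1}}{\mu^{n*}_{s-1}}\,f\ast f_s^{(n-1)*}(x)+\frac{1}{\mu^{n*}_{s-1}}\sum_{\ell=1}^{s-1}\binom{s-1}{\ell}\mu^{(n-1)*}_{s-\ell-1}\,\mu_\ell\, f_{\ell+1}(x),$$ where $\mu^{k*}_j=\mathbb{E}S_k^j$ and $\mu_j=\mathbb{E}X^j$.
   Context: For a nonnegative absolutely continuous random variable $Y$ with density $f_Y$, set $\overline{T}_{Y,0}=f_Y$, $\mu_{Y,0}=1$, and for integers $s\geq 1$ define recursively $\overline{T}_{Y,s}(x)=\frac{1}{\mu_{Y,s-1}}\int_x^\infty\overline{T}_{Y,s-1}(t)\,dt$ and $\mu_{Y,s}=\int_0^\infty\overline{T}_{Y,s}(t)\,dt$ (whenever these quantities are finite). $\overline{T}_{Y,s}$ is the tail of the $s$-iterated distribution induced by $Y$, whose density is $\overline{T}_{Y,s-1}/\mu_{Y,s-1}$. Notation: $f_s$ denotes the density of the $s$-iterated distribution induced by $X$; $f_s^{k*}$ denotes the density of the $s$-iterated distribution induced by $S_k$ (so $f_s^{1*}=f_s$). Convolution of densities on $[0,\infty)$ is $g\ast h(x)=\int_0^x g(t)h(x-t)\,dt$.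 *)

theory Defs
  imports "HOL-Probability.Probability"
begin

fun iter_tail :: "(real \<Rightarrow> real) \<Rightarrow> nat \<Rightarrow> real \<Rightarrow> real" where
  "iter_tail g 0 = g"
| "iter_tail g (Suc s) =
     (\<lambda>x. (LBINT t:{x..}. iter_tail g s t) /
          (if s = 0 then 1 else (LBINT t:{0..}. iter_tail g s t)))"

definition iter_mu :: "(real \<Rightarrow> real) \<Rightarrow> nat \<Rightarrow> real" where
  "iter_mu g s = (if s = 0 then 1 else (LBINT t:{0..}. iter_tail g s t))"

definition iter_density :: "(real \<Rightarrow> real) \<Rightarrow> nat \<Rightarrow> real \<Rightarrow> real" where
  "iter_density g s x = iter_tail g (s - 1) x / iter_mu g (s - 1)"

definition conv :: "(real \<Rightarrow> real) \<Rightarrow> (real \<Rightarrow> real) \<Rightarrow> real \<Rightarrow> real" where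
  "conv g h x = (LBINT t:{0..x}. g t * h (x - t))"

end

theory Submission
  imports Defs
begin
definition pp :: "nat \<Rightarrow> real \<Rightarrow> real \<Rightarrow> real" where
  "pp k y x = (if x \<le> y then (y - x) ^ k else 0)"

lemma pp_nonneg: "0 \<le> pp k y x"
  by (simp add: pp_def)

lemma pp_measurable[measurable]:
  assumes [measurable]: "Y \<in> borel_measurable N" "T \<in> borel_measurable N"
  shows "(\<lambda>w. pp k (Y w) (T w)) \<in> borel_measurable N"
  unfolding pp_def by measurable

lemma pp_inner:
  "(\<integral>\<^sup>+ t. ennreal (pp k y t) * indicator {x..} t \<partial>lborel) = ennreal (pp (Suc k) y x / Suc k)"
proof (cases "x \<le> y")
  case True
  define F where "F = (\<lambda>t::real. - ((y - t) ^ (Suc k)) / real (Suc k))"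
  have "(\<integral>\<^sup>+ t. ennreal (pp k y t) * indicator {x..} t \<partial>lborel)
      = (\<integral>\<^sup>+ t. ennreal ((y - t) ^ k) * indicator {x..y} t \<partial>lborel)"
    by (intro nn_integral_cong) (auto simp: pp_def indicator_def)
  also have "(\<integral>\<^sup>+ t. ennreal ((y - t) ^ k) * indicator {x..y} t \<partial>lborel) = ennreal (F y - F x)"
    using True unfolding F_def
    by (intro nn_integral_FTC_Icc) (auto intro!: derivative_eq_intros simp del: power_Suc)
  finally show ?thesis using True by (simp add: pp_def F_def del: power_Suc)
next
  case False
  then have "(\<lambda>t. ennreal (pp k y t) * indicator {x..} t) = (\<lambda>t. 0)"
    by (auto simp: pp_def indicator_def fun_eq_iff)
  then show ?thesis using False by (simp add: pp_def)
qed

lemma pow_le_one_plus: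
  fixes y :: real assumes "0 \<le> y" "j \<le> m" shows "y ^ j \<le> 1 + y ^ m"
proof (cases "y \<le> 1")
  case True then have "y ^ j \<le> 1" using assms by (simp add: power_le_one)
  then show ?thesis using assms by (smt (verit) zero_le_power)
next
  case False then have "y ^ j \<le> y ^ m" using assms by (intro power_increasing) auto
  then show ?thesis by simp
qed

lemma sum_pow_le:
  fixes a b :: real assumes "0 \<le> a" "0 \<le> b"
  shows "(a + b) ^ p \<le> 2 ^ p * (a ^ p + b ^ p)"
proof -
  have "(a + b) ^ p \<le> (2 * max a b) ^ p"
    using assms by (intro power_mono) auto
  also have "\<dots> = 2 ^ p * max a b ^ p" by (simp add: power_mult_distrib)
  also have "max a b ^ p \<le> a ^ p + b ^ p"
    using assms by (auto simp: max_def)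
  then have "2 ^ p * max a b ^ p \<le> 2 ^ p * (a ^ p + b ^ p)" by simp
  finally show ?thesis .
qed

context prob_space
begin

lemma integrable_pow_le:
  fixes Y :: "'a \<Rightarrow> real"
  assumes [measurable]: "Y \<in> borel_measurable M" and nn: "AE \<omega> in M. 0 \<le> Y \<omega>"
    and int: "integrable M (\<lambda>\<omega>. Y \<omega> ^ m)" and "j \<le> m"
  shows "integrable M (\<lambda>\<omega>. Y \<omega> ^ j)"
proof (rule Bochner_Integration.integrable_bound[of _ "\<lambda>\<omega>. 1 + Y \<omega> ^ m"])
  show "integrable M (\<lambda>\<omega>. 1 + Y \<omega> ^ m)" using int by simp
  show "AE \<omega> in M. norm (Y \<omega> ^ j) \<le> norm (1 + Y \<omega> ^ m)"
    using nn by eventually_elim (use assms(4) pow_le_one_plus in auto)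
qed simp

lemma pp_le_pow: "0 \<le> y \<Longrightarrow> 0 \<le> x \<Longrightarrow> pp k y x \<le> y ^ k"
  by (auto simp: pp_def intro!: power_mono)

lemma integrable_pp:
  fixes Y :: "'a \<Rightarrow> real"
  assumes [measurable]: "Y \<in> borel_measurable M" and nn: "AE \<omega> in M. 0 \<le> Y \<omega>"
    and int: "integrable M (\<lambda>\<omega>. Y \<omega> ^ k)" and x: "0 \<le> x"
  shows "integrable M (\<lambda>\<omega>. pp k (Y \<omega>) x)"
proof (rule Bochner_Integration.integrable_bound[OF int])
  show "AE \<omega> in M. norm (pp k (Y \<omega>) x) \<le> norm (Y \<omega> ^ k)"
    using nn by eventually_elim (use x pp_le_pow pp_nonneg in auto)
qed simp

lemma tail_int:
  fixes Y :: "'a \<Rightarrow> real"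
  assumes [measurable]: "Y \<in> borel_measurable M" and nn: "AE \<omega> in M. 0 \<le> Y \<omega>"
    and int: "integrable M (\<lambda>\<omega>. Y \<omega> ^ Suc k)" and x: "0 \<le> x"
  shows "set_integrable lborel {x..} (\<lambda>t. \<integral>\<omega>. pp k (Y \<omega>) t \<partial>M)"
    and "(LBINT t:{x..}. \<integral>\<omega>. pp k (Y \<omega>) t \<partial>M) = (\<integral>\<omega>. pp (Suc k) (Y \<omega>) x \<partial>M) / Suc k"
proof -
  interpret P: pair_sigma_finite M lborel
    by (simp add: pair_sigma_finite_def lborel.sigma_finite_measure_axioms sigma_finite_measure_axioms)
  have intk: "integrable M (\<lambda>\<omega>. Y \<omega> ^ k)"
    by (rule integrable_pow_le[OF _ nn int]) auto
  have intS: "integrable M (\<lambda>\<omega>. pp (Suc k) (Y \<omega>) x / Suc k)"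
    using integrable_pp[OF _ nn int x] by simp
  have "(\<integral>\<^sup>+ t. ennreal ((\<integral>\<omega>. pp k (Y \<omega>) t \<partial>M) * indicator {x..} t) \<partial>lborel)
      = (\<integral>\<^sup>+ t. (\<integral>\<^sup>+ \<omega>. ennreal (pp k (Y \<omega>) t) * indicator {x..} t \<partial>M) \<partial>lborel)"
  proof (intro nn_integral_cong)
    fix t
    show "ennreal ((\<integral>\<omega>. pp k (Y \<omega>) t \<partial>M) * indicator {x..} t)
        = (\<integral>\<^sup>+ \<omega>. ennreal (pp k (Y \<omega>) t) * indicator {x..} t \<partial>M)"
    proof (cases "x \<le> t")
      case True
      then have "ennreal (\<integral>\<omega>. pp k (Y \<omega>) t \<partial>M) = (\<integral>\<^sup>+ \<omega>. ennreal (pp k (Y \<omega>) t) \<partial>M)"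
        using x by (intro nn_integral_eq_integral[symmetric] integrable_pp[OF _ nn intk]) (auto simp: pp_nonneg)
      then show ?thesis using True by (simp add: nn_integral_multc)
    qed simp
  qed
  also have "\<dots> = (\<integral>\<^sup>+ \<omega>. (\<integral>\<^sup>+ t. ennreal (pp k (Y \<omega>) t) * indicator {x..} t \<partial>lborel) \<partial>M)"
    by (rule P.Fubini') measurable
  also have "\<dots> = (\<integral>\<^sup>+ \<omega>. ennreal (pp (Suc k) (Y \<omega>) x / Suc k) \<partial>M)"
    by (simp only: pp_inner)
  also have "\<dots> = ennreal (\<integral>\<omega>. pp (Suc k) (Y \<omega>) x / Suc k \<partial>M)"
    by (intro nn_integral_eq_integral intS) (auto simp: pp_nonneg)
  finally have *: "integrable lborel (\<lambda>t. (\<integral>\<omega>. pp k (Y \<omega>) t \<partial>M) * indicator {x..} t) \<and>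
      (\<integral>t. (\<integral>\<omega>. pp k (Y \<omega>) t \<partial>M) * indicator {x..} t \<partial>lborel) = (\<integral>\<omega>. pp (Suc k) (Y \<omega>) x / Suc k \<partial>M)"
    by (subst (asm) nn_integral_eq_integrable)
       (auto intro!: integral_nonneg_AE AE_I2 mult_nonneg_nonneg simp: pp_nonneg)
  then show "set_integrable lborel {x..} (\<lambda>t. \<integral>\<omega>. pp k (Y \<omega>) t \<partial>M)"
    unfolding set_integrable_def by (simp add: mult.commute)
  show "(LBINT t:{x..}. \<integral>\<omega>. pp k (Y \<omega>) t \<partial>M) = (\<integral>\<omega>. pp (Suc k) (Y \<omega>) x \<partial>M) / Suc k"
    using * unfolding set_lebesgue_integral_def by (simp add: mult.commute)
qed

lemma dist_meas:
  fixes Y :: "'a \<Rightarrow> real"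
  assumes "distributed M lborel Y g"
  shows "Y \<in> borel_measurable M"
  using distributed_measurable[OF assms] by simp

lemma AE_nonzero:
  fixes Y :: "'a \<Rightarrow> real"
  assumes D: "distributed M lborel Y (\<lambda>t. ennreal (g t))"
  shows "AE \<omega> in M. Y \<omega> \<noteq> 0"
proof (rule AE_I[where N="Y -` {0} \<inter> space M"])
  have Ymeas[measurable]: "Y \<in> borel_measurable M" using dist_meas[OF D] .
  show "Y -` {0} \<inter> space M \<in> sets M" by measurable
  have "emeasure M (Y -` {0} \<inter> space M) = (\<integral>\<^sup>+t. ennreal (g t) * indicator {0} t \<partial>lborel)"
    using distributed_emeasure[OF D] by simp
  also have "\<dots> = (\<integral>\<^sup>+(t::real). 0 \<partial>lborel)"
    using AE_lborel_singleton[of 0] by (intro nn_integral_cong_AE) (auto elim!: eventually_mono simp: indicator_def)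
  finally show "emeasure M (Y -` {0} \<inter> space M) = 0" by simp
qed auto

lemma moment_pos:
  fixes Y :: "'a \<Rightarrow> real"
  assumes D: "distributed M lborel Y (\<lambda>t. ennreal (g t))" and nn: "AE \<omega> in M. 0 \<le> Y \<omega>"
    and int: "integrable M (\<lambda>\<omega>. Y \<omega> ^ j)"
  shows "0 < (\<integral>\<omega>. Y \<omega> ^ j \<partial>M)"
proof -
  have Ymeas[measurable]: "Y \<in> borel_measurable M" using dist_meas[OF D] .
  have ge: "0 \<le> (\<integral>\<omega>. Y \<omega> ^ j \<partial>M)"
    using nn by (intro integral_nonneg_AE) (auto elim!: eventually_mono)
  show ?thesis
  proof (cases "j = 0")
    case True then show ?thesis by (simp add: prob_space)
  next
    case False
  show ?thesis
  proof (rule ccontr)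
    assume "\<not> ?thesis"
    then have eq: "(\<integral>\<omega>. Y \<omega> ^ j \<partial>M) = 0" using ge by simp
    have nnj: "AE \<omega> in M. 0 \<le> Y \<omega> ^ j" using nn by eventually_elim simp
    have "AE \<omega> in M. Y \<omega> ^ j = 0"
      using integral_nonneg_eq_0_iff_AE[OF int nnj] eq by blast
    with AE_nonzero[OF D] have "AE \<omega> in M. False"
      by eventually_elim (use False in simp)
    then show False by (simp add: AE_False)
  qed
  qed
qed

lemma LBINT_from:
  fixes Y :: "'a \<Rightarrow> real"
  assumes [measurable]: "Y \<in> borel_measurable M" and nn: "AE \<omega> in M. 0 \<le> Y \<omega>"
    and int: "integrable M (\<lambda>\<omega>. Y \<omega> ^ k)" and k: "1 \<le> k" and x: "0 \<le> x"
    and T: "\<And>t. 0 \<le> t \<Longrightarrow> T t = (\<integral>\<omega>. pp (k - 1) (Y \<omega>) t \<partial>M) / c"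
  shows "(LBINT t:{x..}. T t) = (\<integral>\<omega>. pp k (Y \<omega>) x \<partial>M) / (k * c)"
proof -
  have int': "integrable M (\<lambda>\<omega>. Y \<omega> ^ Suc (k - 1))" using int k by simp
  have "(LBINT t:{x..}. T t) = (LBINT t:{x..}. (\<integral>\<omega>. pp (k - 1) (Y \<omega>) t \<partial>M) / c)"
    using x by (intro set_lebesgue_integral_cong) (auto simp: T)
  also have "\<dots> = (LBINT t:{x..}. (\<integral>\<omega>. pp (k - 1) (Y \<omega>) t \<partial>M)) / c"
    by simp
  also have "\<dots> = (\<integral>\<omega>. pp k (Y \<omega>) x \<partial>M) / (k * c)"
    using tail_int(2)[OF _ nn int' x] k by simp
  finally show ?thesis .
qed

lemma E_pp0: 
  fixes Y :: "'a \<Rightarrow> real"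
  assumes [measurable]: "Y \<in> borel_measurable M" and nn: "AE \<omega> in M. 0 \<le> Y \<omega>"
  shows "(\<integral>\<omega>. pp k (Y \<omega>) 0 \<partial>M) = (\<integral>\<omega>. Y \<omega> ^ k \<partial>M)"
  using nn by (intro integral_cong_AE) (auto simp: pp_def elim!: eventually_mono)

lemma tail_closed:
  fixes Y :: "'a \<Rightarrow> real" and g :: "real \<Rightarrow> real"
  assumes D: "distributed M lborel Y (\<lambda>t. ennreal (g t))" and g: "g \<in> borel_measurable borel"
    and gnn: "\<And>t. 0 \<le> g t" and nn: "AE \<omega> in M. 0 \<le> Y \<omega>"
    and int: "integrable M (\<lambda>\<omega>. Y \<omega> ^ m)"
  shows "1 \<le> k \<Longrightarrow> k \<le> Suc m \<Longrightarrow> 0 \<le> x \<Longrightarrow>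
    iter_tail g k x = (\<integral>\<omega>. pp (k - 1) (Y \<omega>) x \<partial>M) / (\<integral>\<omega>. Y \<omega> ^ (k - 1) \<partial>M)"
proof (induction k arbitrary: x)
  case 0 then show ?case by simp
next
  case (Suc k)
  have Ymeas[measurable]: "Y \<in> borel_measurable M" using dist_meas[OF D] .
  show ?case
  proof (cases "k = 0")
    case True
    have "(LBINT t:{x..}. g t) = (\<integral>t. g t * indicator {x..} t \<partial>lborel)"
      unfolding set_lebesgue_integral_def by (simp add: mult.commute)
    also have "\<dots> = (\<integral>\<omega>. indicator {x..} (Y \<omega>) \<partial>M)"
      by (rule distributed_integral[OF D]) (auto simp: gnn)
    also have "\<dots> = (\<integral>\<omega>. pp 0 (Y \<omega>) x \<partial>M)"
      by (intro Bochner_Integration.integral_cong) (auto simp: pp_def indicator_def)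
    finally show ?thesis using True by (simp add: prob_space)
  next
    case False
    have intk: "integrable M (\<lambda>\<omega>. Y \<omega> ^ k)"
      using integrable_pow_le[OF _ nn int] Suc.prems by simp
    have intk1: "integrable M (\<lambda>\<omega>. Y \<omega> ^ (k - 1))"
      using integrable_pow_le[OF _ nn int] Suc.prems by simp
    have a1: "0 < (\<integral>\<omega>. Y \<omega> ^ (k - 1) \<partial>M)" by (rule moment_pos[OF D nn intk1])
    have a2: "0 < (\<integral>\<omega>. Y \<omega> ^ k \<partial>M)" by (rule moment_pos[OF D nn intk])
    have T: "\<And>t. 0 \<le> t \<Longrightarrow> iter_tail g k t = (\<integral>\<omega>. pp (k - 1) (Y \<omega>) t \<partial>M) / (\<integral>\<omega>. Y \<omega> ^ (k - 1) \<partial>M)"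
      using Suc.IH False Suc.prems by simp
    have n: "(LBINT t:{x..}. iter_tail g k t) = (\<integral>\<omega>. pp k (Y \<omega>) x \<partial>M) / (k * (\<integral>\<omega>. Y \<omega> ^ (k - 1) \<partial>M))"
      by (rule LBINT_from[OF _ nn intk _ _ T]) (use False Suc.prems in auto)
    have d: "(LBINT t:{0..}. iter_tail g k t) = (\<integral>\<omega>. Y \<omega> ^ k \<partial>M) / (k * (\<integral>\<omega>. Y \<omega> ^ (k - 1) \<partial>M))"
      using LBINT_from[OF _ nn intk _ _ T, of 0] False E_pp0[OF Ymeas nn] by simp
    show ?thesis using False a1 a2 by (simp add: n d)
  qed
qed

lemma mu_closed:
  fixes Y :: "'a \<Rightarrow> real" and g :: "real \<Rightarrow> real"
  assumes D: "distributed M lborel Y (\<lambda>t. ennreal (g t))" and g: "g \<in> borel_measurable borel"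
    and gnn: "\<And>t. 0 \<le> g t" and nn: "AE \<omega> in M. 0 \<le> Y \<omega>"
    and int: "integrable M (\<lambda>\<omega>. Y \<omega> ^ m)" and k: "1 \<le> k" "k \<le> m"
  shows "iter_mu g k = (\<integral>\<omega>. Y \<omega> ^ k \<partial>M) / (k * (\<integral>\<omega>. Y \<omega> ^ (k - 1) \<partial>M))"
proof -
  have Ymeas[measurable]: "Y \<in> borel_measurable M" using dist_meas[OF D] .
  have intk: "integrable M (\<lambda>\<omega>. Y \<omega> ^ k)"
    using integrable_pow_le[OF _ nn int] k by simp
  have T: "\<And>t. 0 \<le> t \<Longrightarrow> iter_tail g k t = (\<integral>\<omega>. pp (k - 1) (Y \<omega>) t \<partial>M) / (\<integral>\<omega>. Y \<omega> ^ (k - 1) \<partial>M)"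
    using tail_closed[OF D g gnn nn int] k by simp
  show ?thesis
    using LBINT_from[OF _ nn intk _ _ T, of 0] k E_pp0[OF Ymeas nn] by (simp add: iter_mu_def)
qed

lemma dens_closed:
  fixes Y :: "'a \<Rightarrow> real" and g :: "real \<Rightarrow> real"
  assumes D: "distributed M lborel Y (\<lambda>t. ennreal (g t))" and g: "g \<in> borel_measurable borel"
    and gnn: "\<And>t. 0 \<le> g t" and nn: "AE \<omega> in M. 0 \<le> Y \<omega>"
    and int: "integrable M (\<lambda>\<omega>. Y \<omega> ^ (s - 1))" and s: "2 \<le> s" and x: "0 \<le> x"
  shows "iter_density g s x = (s - 1) * (\<integral>\<omega>. pp (s - 2) (Y \<omega>) x \<partial>M) / (\<integral>\<omega>. Y \<omega> ^ (s - 1) \<partial>M)"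
proof -
  have Ymeas[measurable]: "Y \<in> borel_measurable M" using dist_meas[OF D] .
  have intk1: "integrable M (\<lambda>\<omega>. Y \<omega> ^ (s - 2))"
    using integrable_pow_le[OF _ nn int] s by simp
  have a1: "0 < (\<integral>\<omega>. Y \<omega> ^ (s - 2) \<partial>M)" by (rule moment_pos[OF D nn intk1])
  have a2: "0 < (\<integral>\<omega>. Y \<omega> ^ (s - 1) \<partial>M)" by (rule moment_pos[OF D nn int])
  have T: "iter_tail g (s - 1) x = (\<integral>\<omega>. pp (s - 2) (Y \<omega>) x \<partial>M) / (\<integral>\<omega>. Y \<omega> ^ (s - 2) \<partial>M)"
    using tail_closed[OF D g gnn nn int, of "s - 1" x] s x by (simp add: numeral_2_eq_2)
  have mu: "iter_mu g (s - 1) = (\<integral>\<omega>. Y \<omega> ^ (s - 1) \<partial>M) / ((s - 1) * (\<integral>\<omega>. Y \<omega> ^ (s - 2) \<partial>M))"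
    using mu_closed[OF D g gnn nn int, of "s - 1"] s by (simp add: numeral_2_eq_2 of_nat_diff)
  show ?thesis
    using a1 a2 s unfolding iter_density_def T mu by (simp add: field_simps of_nat_diff)
qed


lemma pp_shift: "pp k (a + b) x = pp k b (x - a)"
  by (simp add: pp_def algebra_simps)

lemma conv_part:
  fixes A B :: "'a \<Rightarrow> real" and f :: "real \<Rightarrow> real"
  assumes DA: "distributed M lborel A (\<lambda>t. ennreal (f t))" and f[measurable]: "f \<in> borel_measurable borel"
    and fnn: "\<And>t. 0 \<le> f t" and Ann: "AE \<omega> in M. 0 \<le> A \<omega>"
    and Bm[measurable]: "B \<in> borel_measurable M" and Bnn: "AE \<omega> in M. 0 \<le> B \<omega>"
    and intB: "integrable M (\<lambda>\<omega>. B \<omega> ^ k)" and ind: "indep_var borel A borel B" and x: "0 \<le> x"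
  shows "(LBINT t:{0..x}. f t * (\<integral>\<omega>. pp k (B \<omega>) (x - t) \<partial>M))
       = (\<integral>\<omega>. pp k (A \<omega> + B \<omega>) x * indicator {..<x} (A \<omega>) \<partial>M)"
proof -
  have Am[measurable]: "A \<in> borel_measurable M" using dist_meas[OF DA] .
  define h where "h = (\<lambda>(a::real, b::real). pp k (a + b) x * indicator {0..<x} a)"
  have hm[measurable]: "h \<in> borel_measurable (borel \<Otimes>\<^sub>M borel)"
    unfolding h_def by measurable
  have hnn: "\<And>p. 0 \<le> h p" by (auto simp: h_def pp_nonneg)
  have "(\<integral>\<omega>. pp k (A \<omega> + B \<omega>) x * indicator {..<x} (A \<omega>) \<partial>M) = (\<integral>\<omega>. h (A \<omega>, B \<omega>) \<partial>M)"
    using Ann by (intro integral_cong_AE) (auto simp: h_def indicator_def elim!: eventually_mono)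
  have inth: "integrable M (\<lambda>\<omega>. h (A \<omega>, B \<omega>))"
  proof (rule Bochner_Integration.integrable_bound[OF intB])
    show "AE \<omega> in M. norm (h (A \<omega>, B \<omega>)) \<le> norm (B \<omega> ^ k)"
      using Bnn
    proof eventually_elim
      case (elim \<omega>)
      then show ?case
        using pp_le_pow[OF elim, of "x - A \<omega>" k] pp_nonneg[of k "A \<omega> + B \<omega>" x]
        by (auto simp: h_def indicator_def pp_shift)
    qed
  qed simp
  have sB: "sigma_finite_measure (distr M borel B)"
    by (intro prob_space_imp_sigma_finite prob_space_distr) simp
  have "ennreal (\<integral>\<omega>. h (A \<omega>, B \<omega>) \<partial>M) = (\<integral>\<^sup>+\<omega>. ennreal (h (A \<omega>, B \<omega>)) \<partial>M)"
    by (intro nn_integral_eq_integral[symmetric] inth) (simp add: hnn)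
  also have "\<dots> = (\<integral>\<^sup>+p. ennreal (h p) \<partial>distr M (borel \<Otimes>\<^sub>M borel) (\<lambda>\<omega>. (A \<omega>, B \<omega>)))"
    by (subst nn_integral_distr) auto
  also have "distr M (borel \<Otimes>\<^sub>M borel) (\<lambda>\<omega>. (A \<omega>, B \<omega>)) = distr M borel A \<Otimes>\<^sub>M distr M borel B"
    using ind unfolding indep_var_distribution_eq by simp
  also have "(\<integral>\<^sup>+p. ennreal (h p) \<partial>(distr M borel A \<Otimes>\<^sub>M distr M borel B))
      = (\<integral>\<^sup>+a. \<integral>\<^sup>+b. ennreal (h (a, b)) \<partial>distr M borel B \<partial>distr M borel A)"
    by (rule sigma_finite_measure.nn_integral_fst[OF sB, symmetric]) measurable
  also have "\<dots> = (\<integral>\<^sup>+a. \<integral>\<^sup>+\<omega>. ennreal (h (a, B \<omega>)) \<partial>M \<partial>distr M borel A)"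
    by (intro nn_integral_cong) (simp add: nn_integral_distr)
  also have "\<dots> = (\<integral>\<^sup>+\<omega>'. \<integral>\<^sup>+\<omega>. ennreal (h (A \<omega>', B \<omega>)) \<partial>M \<partial>M)"
    by (subst nn_integral_distr) auto
  also have "\<dots> = (\<integral>\<^sup>+a. ennreal (f a) * (\<integral>\<^sup>+\<omega>. ennreal (h (a, B \<omega>)) \<partial>M) \<partial>lborel)"
    by (rule distributed_nn_integral[OF DA, symmetric]) measurable
  also have "\<dots> = (\<integral>\<^sup>+a. ennreal (f a * indicator {0..<x} a * (\<integral>\<omega>. pp k (B \<omega>) (x - a) \<partial>M)) \<partial>lborel)"
  proof (intro nn_integral_cong)
    fix a
    show "ennreal (f a) * (\<integral>\<^sup>+\<omega>. ennreal (h (a, B \<omega>)) \<partial>M)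
        = ennreal (f a * indicator {0..<x} a * (\<integral>\<omega>. pp k (B \<omega>) (x - a) \<partial>M))"
    proof (cases "a \<in> {0..<x}")
      case True
      have "(\<integral>\<^sup>+\<omega>. ennreal (h (a, B \<omega>)) \<partial>M) = (\<integral>\<^sup>+\<omega>. ennreal (pp k (B \<omega>) (x - a)) \<partial>M)"
        using True by (intro nn_integral_cong) (simp add: h_def pp_shift)
      also have "\<dots> = ennreal (\<integral>\<omega>. pp k (B \<omega>) (x - a) \<partial>M)"
        using True by (intro nn_integral_eq_integral integrable_pp[OF Bm Bnn intB]) (auto simp: pp_nonneg)
      finally show ?thesis using True fnn
        by (simp add: ennreal_mult' integral_nonneg pp_nonneg)
    next
      case False
      then show ?thesis by (simp add: h_def)
    qed
  qed
  finally have eq: "(\<integral>\<^sup>+a. ennreal (f a * indicator {0..<x} a * (\<integral>\<omega>. pp k (B \<omega>) (x - a) \<partial>M)) \<partial>lborel)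
      = ennreal (\<integral>\<omega>. h (A \<omega>, B \<omega>) \<partial>M)" by simp
  have "(\<integral>a. f a * indicator {0..<x} a * (\<integral>\<omega>. pp k (B \<omega>) (x - a) \<partial>M) \<partial>lborel) = (\<integral>\<omega>. h (A \<omega>, B \<omega>) \<partial>M)"
    using eq by (subst (asm) nn_integral_eq_integrable)
      (auto intro!: integral_nonneg_AE AE_I2 mult_nonneg_nonneg simp: pp_nonneg fnn hnn integral_nonneg)
  moreover have "(LBINT t:{0..x}. f t * (\<integral>\<omega>. pp k (B \<omega>) (x - t) \<partial>M))
      = (\<integral>a. f a * indicator {0..<x} a * (\<integral>\<omega>. pp k (B \<omega>) (x - a) \<partial>M) \<partial>lborel)"
    unfolding set_lebesgue_integral_def
    by (intro integral_cong_AE) (use AE_lborel_singleton[of x] in \<open>auto elim!: eventually_mono simp: indicator_def\<close>)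
  ultimately show ?thesis using \<open>(\<integral>\<omega>. pp k (A \<omega> + B \<omega>) x * indicator {..<x} (A \<omega>) \<partial>M) = _\<close> by simp
qed


lemma binom_part:
  fixes A B :: "'a \<Rightarrow> real"
  assumes Am[measurable]: "A \<in> borel_measurable M" and Ann: "AE \<omega> in M. 0 \<le> A \<omega>"
    and Bm[measurable]: "B \<in> borel_measurable M" and Bnn: "AE \<omega> in M. 0 \<le> B \<omega>"
    and intA: "integrable M (\<lambda>\<omega>. A \<omega> ^ k)" and intB: "integrable M (\<lambda>\<omega>. B \<omega> ^ k)"
    and ind: "indep_var borel A borel B" and x: "0 \<le> x"
  shows "(\<integral>\<omega>. pp k (A \<omega> + B \<omega>) x * indicator {x..} (A \<omega>) \<partial>M)
       = (\<Sum>j\<le>k. real (k choose j) * (\<integral>\<omega>. pp j (A \<omega>) x \<partial>M) * (\<integral>\<omega>. B \<omega> ^ (k - j) \<partial>M))"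
proof -
  have intAj: "\<And>j. j \<le> k \<Longrightarrow> integrable M (\<lambda>\<omega>. pp j (A \<omega>) x)"
    by (rule integrable_pp[OF Am Ann integrable_pow_le[OF Am Ann intA] x])
  have intBj: "\<And>j. j \<le> k \<Longrightarrow> integrable M (\<lambda>\<omega>. B \<omega> ^ (k - j))"
    by (rule integrable_pow_le[OF Bm Bnn intB]) simp
  have indj: "\<And>j. indep_var borel (\<lambda>\<omega>. pp j (A \<omega>) x) borel (\<lambda>\<omega>. B \<omega> ^ (k - j))"
    using indep_var_compose[OF ind, of "\<lambda>a. pp j a x" borel "\<lambda>b. b ^ (k - j)" borel for j]
    by (simp add: comp_def)
  have "(\<integral>\<omega>. pp k (A \<omega> + B \<omega>) x * indicator {x..} (A \<omega>) \<partial>M)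
      = (\<integral>\<omega>. (\<Sum>j\<le>k. real (k choose j) * (pp j (A \<omega>) x * B \<omega> ^ (k - j))) \<partial>M)"
  proof (intro integral_cong_AE)
    show "AE \<omega> in M. pp k (A \<omega> + B \<omega>) x * indicator {x..} (A \<omega>)
        = (\<Sum>j\<le>k. real (k choose j) * (pp j (A \<omega>) x * B \<omega> ^ (k - j)))"
      using Bnn
    proof eventually_elim
      case (elim \<omega>)
      show ?case
      proof (cases "x \<le> A \<omega>")
        case True
        have "pp k (A \<omega> + B \<omega>) x = ((A \<omega> - x) + B \<omega>) ^ k"
          using True elim by (simp add: pp_def algebra_simps)
        also have "\<dots> = (\<Sum>j\<le>k. real (k choose j) * (A \<omega> - x) ^ j * B \<omega> ^ (k - j))"
          by (rule binomial_ring)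
        finally show ?thesis using True by (simp add: pp_def mult.assoc)
      next
        case False
        then show ?thesis by (simp add: pp_def)
      qed
    qed
  qed measurable
  also have "\<dots> = (\<Sum>j\<le>k. (\<integral>\<omega>. real (k choose j) * (pp j (A \<omega>) x * B \<omega> ^ (k - j)) \<partial>M))"
    by (intro Bochner_Integration.integral_sum integrable_mult_right indep_var_integrable[OF indj] intAj intBj) auto
  also have "\<dots> = (\<Sum>j\<le>k. real (k choose j) * (\<integral>\<omega>. pp j (A \<omega>) x \<partial>M) * (\<integral>\<omega>. B \<omega> ^ (k - j) \<partial>M))"
    by (intro sum.cong refl) (simp add: indep_var_lebesgue_integral[OF indj intAj intBj])
  finally show ?thesis .
qed


lemma integrable_sum_pow:
  fixes X :: "nat \<Rightarrow> 'a \<Rightarrow> real"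
  assumes "finite I" and m: "\<And>i. i \<in> I \<Longrightarrow> X i \<in> borel_measurable M"
    and nn: "\<And>i. i \<in> I \<Longrightarrow> AE \<omega> in M. 0 \<le> X i \<omega>"
    and int: "\<And>i. i \<in> I \<Longrightarrow> integrable M (\<lambda>\<omega>. X i \<omega> ^ p)"
  shows "integrable M (\<lambda>\<omega>. (\<Sum>i\<in>I. X i \<omega>) ^ p) \<and> (AE \<omega> in M. 0 \<le> (\<Sum>i\<in>I. X i \<omega>))"
  using assms
proof (induction I rule: finite_induct)
  case empty
  then show ?case by simp
next
  case (insert i F)
  have IH: "integrable M (\<lambda>\<omega>. (\<Sum>i\<in>F. X i \<omega>) ^ p)" "AE \<omega> in M. 0 \<le> (\<Sum>i\<in>F. X i \<omega>)"
    using insert by auto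
  have mi[measurable]: "X i \<in> borel_measurable M" using insert by auto
  have mF[measurable]: "(\<lambda>\<omega>. \<Sum>i\<in>F. X i \<omega>) \<in> borel_measurable M"
    using insert by (intro borel_measurable_sum) auto
  have nni: "AE \<omega> in M. 0 \<le> X i \<omega>" using insert by auto
  have "integrable M (\<lambda>\<omega>. (X i \<omega> + (\<Sum>i\<in>F. X i \<omega>)) ^ p)"
  proof (rule Bochner_Integration.integrable_bound[of _ "\<lambda>\<omega>. 2 ^ p * (X i \<omega> ^ p + (\<Sum>i\<in>F. X i \<omega>) ^ p)"])
    show "integrable M (\<lambda>\<omega>. 2 ^ p * (X i \<omega> ^ p + (\<Sum>i\<in>F. X i \<omega>) ^ p))"
      using insert IH by (intro integrable_mult_right Bochner_Integration.integrable_add) auto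
    show "AE \<omega> in M. norm ((X i \<omega> + (\<Sum>i\<in>F. X i \<omega>)) ^ p) \<le> norm (2 ^ p * (X i \<omega> ^ p + (\<Sum>i\<in>F. X i \<omega>) ^ p))"
      using nni IH(2) by eventually_elim (use sum_pow_le in auto)
  qed measurable
  moreover have "AE \<omega> in M. 0 \<le> X i \<omega> + (\<Sum>i\<in>F. X i \<omega>)"
    using nni IH(2) by eventually_elim simp
  ultimately show ?case using insert by simp
qed

end

theorem theorem2:
  fixes M :: "'a measure" and Z :: "'a \<Rightarrow> real" and X :: "nat \<Rightarrow> 'a \<Rightarrow> real"
    and f :: "real \<Rightarrow> real" and g :: "nat \<Rightarrow> real \<Rightarrow> real"
    and s n :: nat and x :: real
  assumes "prob_space M"
    and "f \<in> borel_measurable borel" and "\<And>t. f t \<ge> 0"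
    and "distributed M lborel Z (\<lambda>t. ennreal (f t))"
    and "AE \<omega> in M. Z \<omega> \<ge> 0"
    and "\<And>i. i \<in> {1..n} \<Longrightarrow> distributed M lborel (X i) (\<lambda>t. ennreal (f t))"
    and "\<And>i. i \<in> {1..n} \<Longrightarrow> AE \<omega> in M. X i \<omega> \<ge> 0"
    and "prob_space.indep_vars M (\<lambda>_. borel) X {1..n}"
    and "\<And>k. k \<in> {n - 1, n} \<Longrightarrow> g k \<in> borel_measurable borel"
    and "\<And>k t. k \<in> {n - 1, n} \<Longrightarrow> g k t \<ge> 0"
    and "\<And>k. k \<in> {n - 1, n} \<Longrightarrow>
           distributed M lborel (\<lambda>\<omega>. \<Sum>i\<in>{1..k}. X i \<omega>) (\<lambda>t. ennreal (g k t))"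
    and "integrable M (\<lambda>\<omega>. Z \<omega> ^ (s - 1))"
    and "2 \<le> s" and "2 \<le> n" and "0 \<le> x"
  shows "iter_density (g n) s x =
      (\<integral>\<omega>. (\<Sum>i\<in>{1..n-1}. X i \<omega>) ^ (s - 1) \<partial>M)
        / (\<integral>\<omega>. (\<Sum>i\<in>{1..n}. X i \<omega>) ^ (s - 1) \<partial>M)
        * conv f (iter_density (g (n - 1)) s) x
    + 1 / (\<integral>\<omega>. (\<Sum>i\<in>{1..n}. X i \<omega>) ^ (s - 1) \<partial>M)
        * (\<Sum>l = 1..s - 1. real (s - 1 choose l)
             * (\<integral>\<omega>. (\<Sum>i\<in>{1..n-1}. X i \<omega>) ^ (s - l - 1) \<partial>M)
             * (\<integral>\<omega>. Z \<omega> ^ l \<partial>M)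
             * iter_density f (l + 1) x)"
proof -
  interpret prob_space M by (rule assms(1))
  note fm = assms(2) and fnn = assms(3) and DZ = assms(4) and Znn = assms(5)
    and DX = assms(6) and Xnn = assms(7) and indep = assms(8)
    and intZ = assms(12) and x = assms(15)
  define k where "k = s - 2"
  have s: "s = Suc (Suc k)" using assms(13) unfolding k_def by simp
  define m where "m = n - 1"
  have n: "n = Suc m" and m: "1 \<le> m" using assms(14) unfolding m_def by auto
  define S' where "S' = (\<lambda>\<omega>. \<Sum>i\<in>{1..m}. X i \<omega>)"
  define S where "S = (\<lambda>\<omega>. \<Sum>i\<in>{1..n}. X i \<omega>)"
  have Xm[measurable]: "\<And>i. i \<in> {1..n} \<Longrightarrow> X i \<in> borel_measurable M"
    using DX dist_meas by blast
  have Zm[measurable]: "Z \<in> borel_measurable M" using dist_meas[OF DZ] .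
  have intX: "\<And>i. i \<in> {1..n} \<Longrightarrow> integrable M (\<lambda>\<omega>. X i \<omega> ^ Suc k)"
  proof -
    fix i assume i: "i \<in> {1..n}"
    have "integrable lborel (\<lambda>t. f t * t ^ Suc k)"
      using distributed_integrable[OF DZ, of "\<lambda>t. t ^ Suc k"] intZ s fnn by simp
    then show "integrable M (\<lambda>\<omega>. X i \<omega> ^ Suc k)"
      using distributed_integrable[OF DX[OF i], of "\<lambda>t. t ^ Suc k"] fnn by simp
  qed
  have SS: "integrable M (\<lambda>\<omega>. S \<omega> ^ Suc k) \<and> (AE \<omega> in M. 0 \<le> S \<omega>)"
    unfolding S_def by (rule integrable_sum_pow) (use Xm Xnn intX in auto)
  have SS': "integrable M (\<lambda>\<omega>. S' \<omega> ^ Suc k) \<and> (AE \<omega> in M. 0 \<le> S' \<omega>)"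
    unfolding S'_def by (rule integrable_sum_pow) (use Xm Xnn intX n in auto)
  have S'nn: "AE \<omega> in M. 0 \<le> S' \<omega>" using SS' by blast
  have S'm[measurable]: "S' \<in> borel_measurable M" unfolding S'_def using n Xm by (intro borel_measurable_sum) auto
  have Sm[measurable]: "S \<in> borel_measurable M" unfolding S_def using Xm by (intro borel_measurable_sum) auto
  have set_eq: "{1..n} = insert n {1..m}" using n by auto
  have S_eq: "\<And>\<omega>. S \<omega> = X n \<omega> + S' \<omega>"
    unfolding S_def S'_def set_eq using n by simp
  have ind: "indep_var borel (X n) borel S'"
    unfolding S'_def by (rule indep_vars_sum) (use indep set_eq n in auto)
  have DS: "distributed M lborel S (\<lambda>t. ennreal (g n t))" unfolding S_def using assms(11) by simp
  have DS': "distributed M lborel S' (\<lambda>t. ennreal (g m t))" unfolding S'_def using assms(11)[of m] n by simp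
  have gm: "g n \<in> borel_measurable borel" "g m \<in> borel_measurable borel" using assms(9) n by auto
  have gnn: "\<And>t. 0 \<le> g n t" "\<And>t. 0 \<le> g m t" using assms(10) n by auto
  have Xn: "n \<in> {1..n}" using n by simp
  have Xnm[measurable]: "X n \<in> borel_measurable M" using Xm[OF Xn] .
  define A where "A = (\<integral>\<omega>. S \<omega> ^ Suc k \<partial>M)"
  define B where "B = (\<integral>\<omega>. S' \<omega> ^ Suc k \<partial>M)"
  have Bpos: "0 < B" unfolding B_def using moment_pos[OF DS'] SS' by blast
  have Apos: "0 < A" unfolding A_def using moment_pos[OF DS] SS by blast
  define P where "P = (\<integral>\<omega>. pp k (S \<omega>) x \<partial>M)"
  define C1 where "C1 = (\<integral>\<omega>. pp k (S \<omega>) x * indicator {..<x} (X n \<omega>) \<partial>M)"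
  define D1 where "D1 = (\<integral>\<omega>. pp k (S \<omega>) x * indicator {x..} (X n \<omega>) \<partial>M)"
  have intSk: "integrable M (\<lambda>\<omega>. S \<omega> ^ k)"
    using integrable_pow_le[OF Sm _ _, of "Suc k" k] SS by auto
  have intS'k: "integrable M (\<lambda>\<omega>. S' \<omega> ^ k)"
    using integrable_pow_le[OF S'm _ _, of "Suc k" k] SS' by auto
  have intXk: "integrable M (\<lambda>\<omega>. X n \<omega> ^ k)"
    using integrable_pow_le[OF Xm[OF Xn] Xnn[OF Xn] intX[OF Xn], of k] by auto
  have intP: "integrable M (\<lambda>\<omega>. pp k (S \<omega>) x)"
    using integrable_pp[OF Sm _ intSk x] SS by auto
  have intPI: "integrable M (\<lambda>\<omega>. pp k (S \<omega>) x * indicator I (X n \<omega>))" if "I \<in> sets borel" for I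
  proof (rule Bochner_Integration.integrable_bound[OF intP])
    show "AE \<omega> in M. norm (pp k (S \<omega>) x * indicator I (X n \<omega>)) \<le> norm (pp k (S \<omega>) x)"
      by (auto simp: indicator_def)
  qed (use that in measurable)
  have PCD: "P = C1 + D1"
    unfolding P_def C1_def D1_def
    by (subst Bochner_Integration.integral_add[symmetric, OF intPI intPI])
       (auto intro!: Bochner_Integration.integral_cong simp: indicator_def)
  have LHS: "iter_density (g n) s x = Suc k * P / A"
    unfolding P_def A_def using dens_closed[OF DS gm(1) gnn(1) _ _ _ x, of s] SS s by simp
  have conv: "conv f (iter_density (g (n - 1)) s) x = Suc k / B * C1"
  proof -
    have "conv f (iter_density (g (n - 1)) s) x = (LBINT t:{0..x}. Suc k / B * (f t * (\<integral>\<omega>. pp k (S' \<omega>) (x - t) \<partial>M)))"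
      unfolding conv_def
    proof (intro set_lebesgue_integral_cong allI impI)
      fix t assume "t \<in> {0..x}"
      then show "f t * iter_density (g (n - 1)) s (x - t) = Suc k / B * (f t * (\<integral>\<omega>. pp k (S' \<omega>) (x - t) \<partial>M))"
        using dens_closed[OF DS' gm(2) gnn(2) _ _ _, of s "x - t"] SS' s n unfolding B_def by simp
    qed simp
    also have "\<dots> = Suc k / B * C1"
      unfolding C1_def
      using SS' by (simp only: set_integral_mult_right conv_part[OF DX[OF Xn] fm fnn Xnn[OF Xn] S'm S'nn intS'k ind x] S_eq)
    finally show ?thesis .
  qed
  have D1eq: "D1 = (\<Sum>j\<le>k. real (k choose j) * (\<integral>\<omega>. pp j (Z \<omega>) x \<partial>M) * (\<integral>\<omega>. S' \<omega> ^ (k - j) \<partial>M))"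
  proof -
    have EZ: "(\<integral>\<omega>. pp j (X n \<omega>) x \<partial>M) = (\<integral>\<omega>. pp j (Z \<omega>) x \<partial>M)" for j
      using distributed_integral[OF DX[OF Xn], of "\<lambda>t. pp j t x"] distributed_integral[OF DZ, of "\<lambda>t. pp j t x"] fnn
      by simp
    show ?thesis
      unfolding D1_def S_eq
      using binom_part[OF Xm[OF Xn] Xnn[OF Xn] S'm _ intXk intS'k ind x] SS' by (simp add: EZ)
  qed
  have sumeq: "(\<Sum>l = 1..s - 1. real (s - 1 choose l)
             * (\<integral>\<omega>. (\<Sum>i\<in>{1..n-1}. X i \<omega>) ^ (s - l - 1) \<partial>M)
             * (\<integral>\<omega>. Z \<omega> ^ l \<partial>M)
             * iter_density f (l + 1) x) = Suc k * D1"
  proof -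
    have "(\<Sum>l = 1..s - 1. real (s - 1 choose l)
             * (\<integral>\<omega>. (\<Sum>i\<in>{1..n-1}. X i \<omega>) ^ (s - l - 1) \<partial>M)
             * (\<integral>\<omega>. Z \<omega> ^ l \<partial>M)
             * iter_density f (l + 1) x)
        = (\<Sum>j = 0..k. real (Suc k choose Suc j)
             * (\<integral>\<omega>. S' \<omega> ^ (k - j) \<partial>M)
             * (\<integral>\<omega>. Z \<omega> ^ Suc j \<partial>M)
             * iter_density f (Suc j + 1) x)"
    proof -
      define T where "T = (\<lambda>l. real (s - 1 choose l)
             * (\<integral>\<omega>. (\<Sum>i\<in>{1..n-1}. X i \<omega>) ^ (s - l - 1) \<partial>M)
             * (\<integral>\<omega>. Z \<omega> ^ l \<partial>M)
             * iter_density f (l + 1) x)"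
      have "{1..s - 1} = Suc ` {0..k}" using s by (simp add: image_Suc_atLeastAtMost)
      then have "sum T {1..s - 1} = sum (T \<circ> Suc) {0..k}"
        by (simp only: sum.reindex inj_Suc inj_on_subset subset_UNIV)
      also have "\<dots> = (\<Sum>j = 0..k. real (Suc k choose Suc j)
             * (\<integral>\<omega>. S' \<omega> ^ (k - j) \<partial>M)
             * (\<integral>\<omega>. Z \<omega> ^ Suc j \<partial>M)
             * iter_density f (Suc j + 1) x)"
      proof (intro sum.cong refl)
        fix j assume "j \<in> {0..k}"
        have e1: "s - Suc j - 1 = k - j" using s by simp
        have e2: "n - 1 = m" using n by simp
        show "(T \<circ> Suc) j = real (Suc k choose Suc j)
             * (\<integral>\<omega>. S' \<omega> ^ (k - j) \<partial>M)
             * (\<integral>\<omega>. Z \<omega> ^ Suc j \<partial>M)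
             * iter_density f (Suc j + 1) x"
          unfolding comp_def T_def e1 e2 S'_def using s by simp
      qed
      finally show ?thesis unfolding T_def .
    qed
    also have "\<dots> = (\<Sum>j = 0..k. Suc k * (real (k choose j) * (\<integral>\<omega>. pp j (Z \<omega>) x \<partial>M) * (\<integral>\<omega>. S' \<omega> ^ (k - j) \<partial>M)))"
    proof (intro sum.cong refl)
      fix j assume j: "j \<in> {0..k}"
      have intZj: "integrable M (\<lambda>\<omega>. Z \<omega> ^ (Suc (Suc j) - 1))"
        using integrable_pow_le[OF Zm Znn intZ, of "Suc j"] j s by simp
      have pos: "0 < (\<integral>\<omega>. Z \<omega> ^ Suc j \<partial>M)"
        using moment_pos[OF DZ Znn intZj] by simp
      have dz: "iter_density f (Suc j + 1) x = Suc j * (\<integral>\<omega>. pp j (Z \<omega>) x \<partial>M) / (\<integral>\<omega>. Z \<omega> ^ Suc j \<partial>M)"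
        using dens_closed[OF DZ fm fnn Znn intZj _ x] by simp
      have bin: "real (Suc k choose Suc j) * Suc j = Suc k * real (k choose j)"
        by (metis Suc_times_binomial_eq of_nat_mult)
      show "real (Suc k choose Suc j) * (\<integral>\<omega>. S' \<omega> ^ (k - j) \<partial>M) * (\<integral>\<omega>. Z \<omega> ^ Suc j \<partial>M)
             * iter_density f (Suc j + 1) x
          = Suc k * (real (k choose j) * (\<integral>\<omega>. pp j (Z \<omega>) x \<partial>M) * (\<integral>\<omega>. S' \<omega> ^ (k - j) \<partial>M))"
        unfolding dz
      proof -
        have "real (Suc k choose Suc j) * (\<integral>\<omega>. S' \<omega> ^ (k - j) \<partial>M) * (\<integral>\<omega>. Z \<omega> ^ Suc j \<partial>M)
             * (Suc j * (\<integral>\<omega>. pp j (Z \<omega>) x \<partial>M) / (\<integral>\<omega>. Z \<omega> ^ Suc j \<partial>M))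
           = (real (Suc k choose Suc j) * Suc j) * (\<integral>\<omega>. pp j (Z \<omega>) x \<partial>M) * (\<integral>\<omega>. S' \<omega> ^ (k - j) \<partial>M)"
          using pos by (simp add: field_simps)
        then show "real (Suc k choose Suc j) * (\<integral>\<omega>. S' \<omega> ^ (k - j) \<partial>M) * (\<integral>\<omega>. Z \<omega> ^ Suc j \<partial>M)
             * (Suc j * (\<integral>\<omega>. pp j (Z \<omega>) x \<partial>M) / (\<integral>\<omega>. Z \<omega> ^ Suc j \<partial>M))
           = Suc k * (real (k choose j) * (\<integral>\<omega>. pp j (Z \<omega>) x \<partial>M) * (\<integral>\<omega>. S' \<omega> ^ (k - j) \<partial>M))"
          unfolding bin by (simp add: mult_ac)
      qed
    qed
    also have "\<dots> = Suc k * D1"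
      unfolding D1eq by (simp add: sum_distrib_left atLeast0AtMost)
    finally show ?thesis .
  qed
  have Beq: "(\<integral>\<omega>. (\<Sum>i\<in>{1..n-1}. X i \<omega>) ^ (s - 1) \<partial>M) = B"
    unfolding B_def S'_def using n s by simp
  have Aeq: "(\<integral>\<omega>. (\<Sum>i\<in>{1..n}. X i \<omega>) ^ (s - 1) \<partial>M) = A"
    unfolding A_def S_def using s by simp
  show ?thesis
    unfolding LHS sumeq Beq Aeq conv
    using Bpos Apos PCD by (simp add: field_simps)
qed

end
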